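(* Let $P$ be a connected positroid on $[n]$ and let $I\subseteq[n]$ be a cyclic interval. Then each connected component of $P|_I$ is a cyclic interval.
   Context: A positroid of rank $k$ on $[n]$ is the matroid of a real $k\times n$ matrix of rank $k$ all of whose maximal minors are nonnegative. A cyclic interval is a set $\{a,a+1,\dots,b\}$ with indices modulo $n$. A matroid is connected if it is not a direct sum of two matroids on nonempty ground sets; connected components are the ground sets of the summands in the decomposition into connected matroids. *)

theory Defs
  imports "Jordan_Normal_Form.DL_Rank" "Jordan_Normal_Form.Determinant"
begin

(* Ground set [n] is modelled as {0..<n}; indices are taken modulo n. *)

(* A matroid on ground set E is given by its family of independent sets. *)

definition max_minor :: "real mat \<Rightarrow> nat set \<Rightarrow> real" where
  "max_minor A S = det (mat (dim_row A) (dim_row A)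
      (\<lambda>(i, j). A $$ (i, sorted_list_of_set S ! j)))"

definition matrix_bases :: "real mat \<Rightarrow> nat set set" where
  "matrix_bases A = {B. B \<subseteq> {0..<dim_col A} \<and> card B = dim_row A \<and> max_minor A B \<noteq> 0}"

definition matrix_matroid :: "real mat \<Rightarrow> nat set set" where
  "matrix_matroid A = {X. \<exists>B \<in> matrix_bases A. X \<subseteq> B}"

definition positroid :: "nat \<Rightarrow> nat set set \<Rightarrow> bool" where
  "positroid n P \<longleftrightarrow> (\<exists>k (A :: real mat). A \<in> carrier_mat k n \<and> vec_space.rank k A = k \<and>
      (\<forall>S. S \<subseteq> {0..<n} \<and> card S = k \<longrightarrow> max_minor A S \<ge> 0) \<and>
      P = matrix_matroid A)"

definition restr :: "nat set set \<Rightarrow> nat set \<Rightarrow> nat set set" where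
  "restr M S = {X \<in> M. X \<subseteq> S}"

(* M on E equals the direct sum M|S \<oplus> M|(E-S) *)
definition separator :: "nat set \<Rightarrow> nat set set \<Rightarrow> nat set \<Rightarrow> bool" where
  "separator E M S \<longleftrightarrow> S \<subseteq> E \<and>
     (\<forall>X. X \<subseteq> E \<longrightarrow> (X \<in> M \<longleftrightarrow> X \<inter> S \<in> M \<and> X - S \<in> M))"

definition matroid_connected :: "nat set \<Rightarrow> nat set set \<Rightarrow> bool" where
  "matroid_connected E M \<longleftrightarrow> \<not> (\<exists>S. S \<noteq> {} \<and> S \<subset> E \<and> separator E M S)"

definition connected_component :: "nat set \<Rightarrow> nat set set \<Rightarrow> nat set \<Rightarrow> bool" where
  "connected_component E M C \<longleftrightarrow> C \<noteq> {} \<and> separator E M C \<and> matroid_connected C (restr M C)"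

(* cyclic interval {a, a+1, ..., b} mod n inside {0..<n} (empty and full set included) *)
definition cyclic_interval :: "nat \<Rightarrow> nat set \<Rightarrow> bool" where
  "cyclic_interval n S \<longleftrightarrow> (\<exists>a < n. \<exists>m \<le> n. S = {(a + i) mod n | i. i < m})"

end

theory Submission
  imports Defs
begin

definition Lc :: "real mat \<Rightarrow> nat list \<Rightarrow> real" where
  "Lc A xs = det (mat (dim_row A) (dim_row A) (\<lambda>(i,j). A $$ (i, xs ! j)))"

lemma max_minor_Lc: "max_minor A S = Lc A (sorted_list_of_set S)"
  unfolding max_minor_def Lc_def by simp

lemma Lc_swap:
  assumes "length ys + 2 + length zs = dim_row A"
  shows "Lc A (ys @ p # q # zs) = - Lc A (ys @ q # p # zs)"
proof -
  let ?k = "dim_row A"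
  let ?M1 = "mat ?k ?k (\<lambda>(i,j). A $$ (i, (ys @ p # q # zs) ! j))"
  let ?M2 = "mat ?k ?k (\<lambda>(i,j). A $$ (i, (ys @ q # p # zs) ! j))"
  have eq: "swapcols (length ys) (Suc (length ys)) ?M2 = ?M1"
    by (rule eq_matI) (use assms in \<open>auto simp: nth_append\<close>)
  have "det (swapcols (length ys) (Suc (length ys)) ?M2) = - det ?M2"
    by (rule det_swapcols[where n="dim_row A"]) (use assms in auto)
  then show ?thesis unfolding Lc_def eq by simp
qed

lemma Lc_move:
  assumes "length (ys @ t # zs @ ws) = dim_row A"
  shows "Lc A (ys @ t # zs @ ws) = (-1)^length zs * Lc A (ys @ zs @ t # ws)"
  using assms
proof (induction zs arbitrary: ys)
  case Nil
  then show ?case by simp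
next
  case (Cons w zs)
  have "Lc A (ys @ t # (w # zs) @ ws) = - Lc A (ys @ w # t # zs @ ws)"
    using Lc_swap[of ys "zs @ ws" A t w] Cons.prems by simp
  also have "Lc A (ys @ w # t # zs @ ws) = Lc A ((ys @ [w]) @ t # zs @ ws)" by simp
  also have "\<dots> = (-1)^length zs * Lc A ((ys @ [w]) @ zs @ t # ws)"
    by (rule Cons.IH) (use Cons.prems in simp)
  finally show ?case by simp
qed

lemma Lc_insort:
  assumes "sorted xs" "distinct xs" "t \<notin> set xs" "Suc (length (pre @ xs @ ws)) = dim_row A"
  shows "Lc A (pre @ insort t xs @ ws) = (-1)^(length (filter (\<lambda>x. t < x) xs)) * Lc A (pre @ xs @ t # ws)"
  using assms
proof (induction xs arbitrary: pre)
  case Nil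
  then show ?case by simp
next
  case (Cons y ys)
  show ?case
  proof (cases "t \<le> y")
    case True
    with Cons.prems have ty: "t < y" by auto
    have all: "\<forall>x\<in>set (y#ys). t < x" using Cons.prems(1) ty by auto
    then have "filter (\<lambda>x. t < x) (y#ys) = y#ys" by simp
    moreover have "Lc A (pre @ t # (y#ys) @ ws) = (-1)^length (y#ys) * Lc A (pre @ (y#ys) @ t # ws)"
      by (rule Lc_move) (use Cons.prems in simp)
    ultimately show ?thesis using True by simp
  next
    case False
    then have "insort t (y#ys) = y # insort t ys" by simp
    then have "Lc A (pre @ insort t (y#ys) @ ws) = Lc A ((pre @ [y]) @ insort t ys @ ws)" by simp
    also have "\<dots> = (-1)^(length (filter (\<lambda>x. t < x) ys)) * Lc A ((pre @ [y]) @ ys @ t # ws)"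
      by (rule Cons.IH) (use Cons.prems in auto)
    finally show ?thesis using False by simp
  qed
qed

lemma Lc_insert:
  assumes "finite X" "t \<notin> X" "Suc (card X + length ws) = dim_row A"
  shows "Lc A (sorted_list_of_set (insert t X) @ ws) =
     (-1)^(card {x\<in>X. t < x}) * Lc A (sorted_list_of_set X @ t # ws)"
proof -
  have d: "distinct (sorted_list_of_set X)" by simp
  have "length (filter (\<lambda>x. t < x) (sorted_list_of_set X)) = card {x\<in>X. t < x}"
    using distinct_length_filter[OF d] assms(1) by (simp add: Int_commute Collect_conj_eq)
  moreover have "Lc A ([] @ insort t (sorted_list_of_set X) @ ws) =
     (-1)^(length (filter (\<lambda>x. t < x) (sorted_list_of_set X))) * Lc A ([] @ sorted_list_of_set X @ t # ws)"
    by (rule Lc_insort) (use assms in auto)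
  ultimately show ?thesis using sorted_list_of_set_insert[OF assms(1,2)] by simp
qed


locale tnn =
  fixes A :: "real mat" and k n :: nat
  assumes A_carrier: "A \<in> carrier_mat k n"
begin

definition colv :: "nat \<Rightarrow> nat \<Rightarrow> real" where
  "colv e = (\<lambda>i. if i < k then A $$ (i, e) else 0)"

definition lc :: "(nat \<Rightarrow> real) \<Rightarrow> nat set \<Rightarrow> nat \<Rightarrow> real" where
  "lc c X = (\<lambda>i. \<Sum>e\<in>X. c e * colv e i)"

definition indep :: "nat set \<Rightarrow> bool" where
  "indep X \<longleftrightarrow> finite X \<and> (\<forall>c. lc c X = (\<lambda>_. 0) \<longrightarrow> (\<forall>e\<in>X. c e = 0))"

definition inspan :: "(nat \<Rightarrow> real) \<Rightarrow> nat set \<Rightarrow> bool" where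
  "inspan v X \<longleftrightarrow> (\<exists>c. v = lc c X)"

lemma lc_cong: "(\<And>e. e \<in> X \<Longrightarrow> c e = c' e) \<Longrightarrow> lc c X = lc c' X"
  unfolding lc_def by (auto intro!: sum.cong)

lemma lc_union: "finite X \<Longrightarrow> finite Y \<Longrightarrow> X \<inter> Y = {} \<Longrightarrow> lc c (X \<union> Y) i = lc c X i + lc c Y i"
  unfolding lc_def by (simp add: sum.union_disjoint)

lemma lc_zero_ext: "finite X \<Longrightarrow> Y \<subseteq> X \<Longrightarrow> lc (\<lambda>e. if e \<in> Y then c e else 0) X = lc c Y"
proof -
  assume fX: "finite X" and YX: "Y \<subseteq> X"
  show ?thesis
  proof (rule ext)
    fix i
    have "(\<Sum>e\<in>X. (if e \<in> Y then c e else 0) * colv e i) = (\<Sum>e\<in>X. if e \<in> Y then c e * colv e i else 0)"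
      by (rule sum.cong) auto
    also have "\<dots> = (\<Sum>e\<in>X \<inter> Y. c e * colv e i)"
      using sum.inter_restrict[OF fX, of "\<lambda>e. c e * colv e i" Y] by simp
    also have "X \<inter> Y = Y" using YX by auto
    finally show "lc (\<lambda>e. if e \<in> Y then c e else 0) X i = lc c Y i" unfolding lc_def by simp
  qed
qed

lemma indep_finite: "indep X \<Longrightarrow> finite X" unfolding indep_def by auto

lemma indep_subset:
  assumes "indep X" "Y \<subseteq> X" shows "indep Y"
  unfolding indep_def
proof (intro conjI allI impI ballI)
  show fY: "finite Y" using assms indep_def finite_subset by blast
  fix c e assume c: "lc c Y = (\<lambda>_. 0)" and e: "e \<in> Y"
  let ?c = "\<lambda>e. if e \<in> Y then c e else 0"
  have "lc ?c X = (\<lambda>_. 0)" using lc_zero_ext[of X Y c] assms c indep_def by auto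
  then have "?c e = 0" using assms e unfolding indep_def by blast
  then show "c e = 0" using e by simp
qed

lemma indep_unique:
  assumes "indep X" "lc c X = lc c' X" "e \<in> X" shows "c e = c' e"
proof -
  have "lc (\<lambda>e. c e - c' e) X = (\<lambda>_. 0)"
  proof (rule ext)
    fix i
    have "lc c X i = lc c' X i" using assms(2) by simp
    then show "lc (\<lambda>e. c e - c' e) X i = 0"
      unfolding lc_def by (simp add: left_diff_distrib sum_subtractf)
  qed
  then have "c e - c' e = 0" using assms unfolding indep_def by blast
  then show ?thesis by simp
qed

lemma inspan_self: "finite X \<Longrightarrow> e \<in> X \<Longrightarrow> inspan (colv e) X"
proof -
  assume fX: "finite X" and eX: "e \<in> X"
  have "colv e = lc (\<lambda>x. if x = e then 1 else 0) X"
  proof (rule ext)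
    fix i
    have "lc (\<lambda>x. if x = e then 1 else 0) X i = (\<Sum>x\<in>X. if x = e then colv x i else 0)"
      unfolding lc_def by (rule sum.cong) auto
    also have "\<dots> = colv e i" using fX eX by (simp add: sum.delta')
    finally show "colv e i = lc (\<lambda>x. if x = e then 1 else 0) X i" by simp
  qed
  then show ?thesis unfolding inspan_def by blast
qed

lemma inspan_mono: "finite X \<Longrightarrow> Y \<subseteq> X \<Longrightarrow> inspan v Y \<Longrightarrow> inspan v X"
  unfolding inspan_def using lc_zero_ext by metis

lemma inspan_trans:
  assumes fX: "finite X" and fY: "finite Y" and Y: "\<forall>y\<in>Y. inspan (colv y) X"
  shows "inspan (lc c Y) X"
proof -
  obtain d where d: "\<And>y. y \<in> Y \<Longrightarrow> colv y = lc (d y) X"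
    using Y unfolding inspan_def by metis
  have "lc c Y = lc (\<lambda>x. \<Sum>y\<in>Y. c y * d y x) X"
  proof (rule ext)
    fix i
    have "lc c Y i = (\<Sum>y\<in>Y. c y * (\<Sum>x\<in>X. d y x * colv x i))"
      unfolding lc_def using d by (auto simp: lc_def intro!: sum.cong)
    also have "\<dots> = (\<Sum>y\<in>Y. \<Sum>x\<in>X. c y * d y x * colv x i)"
      by (simp add: sum_distrib_left mult.assoc)
    also have "\<dots> = (\<Sum>x\<in>X. \<Sum>y\<in>Y. c y * d y x * colv x i)"
      by (rule sum.swap)
    also have "\<dots> = lc (\<lambda>x. \<Sum>y\<in>Y. c y * d y x) X i"
      unfolding lc_def by (simp add: sum_distrib_right)
    finally show "lc c Y i = lc (\<lambda>x. \<Sum>y\<in>Y. c y * d y x) X i" .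
  qed
  then show ?thesis unfolding inspan_def by blast
qed

lemma inspan_trans':
  assumes "finite X" "finite Y" "\<forall>y\<in>Y. inspan (colv y) X" "inspan v Y"
  shows "inspan v X"
  using assms inspan_trans unfolding inspan_def by metis

lemma indep_insert:
  assumes "indep X" "e \<notin> X" "\<not> inspan (colv e) X"
  shows "indep (insert e X)"
  unfolding indep_def
proof (intro conjI allI impI ballI)
  have fX: "finite X" using assms indep_def by auto
  then show "finite (insert e X)" by simp
  fix c x assume c: "lc c (insert e X) = (\<lambda>_. 0)" and x: "x \<in> insert e X"
  have split: "\<And>i. lc c (insert e X) i = c e * colv e i + lc c X i"
    unfolding lc_def using fX assms(2) by simp
  have ce: "c e = 0"
  proof (rule ccontr)
    assume ne: "c e \<noteq> 0"
    have "colv e = lc (\<lambda>y. - c y / c e) X"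
    proof (rule ext)
      fix i
      have "c e * colv e i + lc c X i = 0" using split[of i] c by (metis)
      then have "colv e i = - lc c X i / c e" using ne by (simp add: field_simps)
      also have "\<dots> = lc (\<lambda>y. - c y / c e) X i"
        unfolding lc_def by (simp add: sum_divide_distrib sum_negf)
      finally show "colv e i = lc (\<lambda>y. - c y / c e) X i" .
    qed
    then show False using assms(3) unfolding inspan_def by blast
  qed
  then have "lc c X = (\<lambda>_. 0)" using split c by (metis mult_zero_left add_0)
  then have "\<forall>y\<in>X. c y = 0" using assms(1) unfolding indep_def by blast
  then show "c x = 0" using x ce by auto
qed

lemma max_indep:
  assumes fE: "finite E" and YE: "Y \<subseteq> E" and iY: "indep Y"
  shows "\<exists>B. Y \<subseteq> B \<and> B \<subseteq> E \<and> indep B \<and> (\<forall>e\<in>E. inspan (colv e) B)"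
proof -
  let ?P = "\<lambda>T. Y \<subseteq> T \<and> T \<subseteq> E \<and> indep T"
  obtain B where B: "finite B" "maximal B ?P" "Y \<subseteq> B"
    using maximal_exists_superset[of E ?P Y] fE YE iY by blast
  have PB: "?P B" using B(2) unfolding maximal_def by blast
  have "\<forall>e\<in>E. inspan (colv e) B"
  proof
    fix e assume e: "e \<in> E"
    show "inspan (colv e) B"
    proof (cases "e \<in> B")
      case True then show ?thesis using inspan_self B(1) by blast
    next
      case False
      show ?thesis
      proof (rule ccontr)
        assume "\<not> inspan (colv e) B"
        then have "indep (insert e B)" using indep_insert PB False by blast
        then have "?P (insert e B)" using PB e by blast
        then have "insert e B = B" using B(2) unfolding maximal_def by blast
        then show False using False by blast
      qed
    qed
  qed
  then show ?thesis using PB by blast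
qed

lemma coef_zero:
  assumes iB: "indep B" and v: "v = lc c B" and b: "b \<in> B" and sp: "inspan v (B - {b})"
  shows "c b = 0"
proof -
  have fB: "finite B" using iB indep_def by auto
  obtain c' where c': "v = lc c' (B - {b})" using sp inspan_def by blast
  have "lc (\<lambda>e. if e \<in> B - {b} then c' e else 0) B = v"
    using lc_zero_ext[OF fB, of "B - {b}" c'] c' by auto
  then have "c b = (if b \<in> B - {b} then c' b else 0)"
    using indep_unique[OF iB, of c "\<lambda>e. if e \<in> B - {b} then c' e else 0" b] v b by metis
  then show ?thesis by simp
qed

lemma lc_restrict_zero:
  assumes "finite B" "\<forall>b\<in>B'. c b = 0" "B' \<subseteq> B"
  shows "lc c B = lc c (B - B')"
proof -
  have "lc c B = lc (\<lambda>e. if e \<in> B - B' then c e else 0) B"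
    using assms by (intro lc_cong) auto
  also have "\<dots> = lc c (B - B')" using lc_zero_ext[OF assms(1), of "B - B'" c] by simp
  finally show ?thesis .
qed

lemma span_disjoint:
  assumes iB: "indep B" and sub: "B' \<subseteq> B" and v1: "v = lc a B'" and v2: "v = lc a' (B - B')"
  shows "v = (\<lambda>_. 0)"
proof -
  have fB: "finite B" using iB indep_def by auto
  have fB': "finite B'" using fB sub finite_subset by blast
  let ?c = "\<lambda>e. if e \<in> B' then a e else - a' e"
  have "lc ?c B = (\<lambda>_. 0)"
  proof (rule ext)
    fix i
    have "B = B' \<union> (B - B')" using sub by auto
    then have "lc ?c B i = lc ?c B' i + lc ?c (B - B') i"
      using lc_union[of B' "B - B'" ?c i] fB fB' by (metis Diff_disjoint finite_Diff)
    also have "lc ?c B' i = lc a B' i" by (rule fun_cong[OF lc_cong]) auto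
    also have "lc ?c (B - B') i = - lc a' (B - B') i"
      unfolding lc_def by (simp add: sum_negf[symmetric])
    finally show "lc ?c B i = 0" using v1 v2 by simp
  qed
  then have z: "\<forall>e\<in>B. ?c e = 0" using iB indep_def by blast
  have "lc a B' = lc (\<lambda>_. 0) B'"
  proof (rule lc_cong)
    fix e assume e: "e \<in> B'"
    then have "?c e = 0" using z sub by blast
    then show "a e = 0" using e by simp
  qed
  then show ?thesis using v1 unfolding lc_def by simp
qed

lemma indep_union_sep:
  assumes i1: "indep X1" and i2: "indep X2" and dj: "X1 \<inter> X2 = {}"
    and iB: "indep B" and sub: "B' \<subseteq> B"
    and s1: "\<forall>x\<in>X1. inspan (colv x) B'" and s2: "\<forall>x\<in>X2. inspan (colv x) (B - B')"
  shows "indep (X1 \<union> X2)"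
  unfolding indep_def
proof (intro conjI allI impI ballI)
  have f1: "finite X1" using i1 by (rule indep_finite)
  have f2: "finite X2" using i2 by (rule indep_finite)
  show "finite (X1 \<union> X2)" using f1 f2 by simp
  have fB: "finite B" using iB by (rule indep_finite)
  have fB': "finite B'" using fB sub finite_subset by blast
  have fBB: "finite (B - B')" using fB by simp
  fix c x assume c: "lc c (X1 \<union> X2) = (\<lambda>_. 0)" and x: "x \<in> X1 \<union> X2"
  have eq: "lc c X1 = (\<lambda>i. - lc c X2 i)"
  proof (rule ext)
    fix i
    have "lc c (X1 \<union> X2) i = 0" using c by simp
    then have "lc c X1 i + lc c X2 i = 0" using lc_union[OF f1 f2 dj, of c i] by simp
    then show "lc c X1 i = - lc c X2 i" by linarith
  qed
  have "inspan (lc c X1) B'" using inspan_trans[OF fB' f1 s1] .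
  then obtain a where a: "lc c X1 = lc a B'" unfolding inspan_def by blast
  have "inspan (lc c X2) (B - B')" using inspan_trans[OF fBB f2 s2] .
  then obtain a' where a': "lc c X2 = lc a' (B - B')" unfolding inspan_def by blast
  have "lc c X1 = lc (\<lambda>e. - a' e) (B - B')"
  proof (rule ext)
    fix i
    have "lc c X1 i = - lc a' (B - B') i" using eq a' by simp
    also have "\<dots> = lc (\<lambda>e. - a' e) (B - B') i" unfolding lc_def by (simp add: sum_negf)
    finally show "lc c X1 i = lc (\<lambda>e. - a' e) (B - B') i" .
  qed
  then have z1: "lc c X1 = (\<lambda>_. 0)" using span_disjoint[OF iB sub a] by blast
  have z2: "lc c X2 = (\<lambda>_. 0)"
  proof (rule ext)
    fix i show "lc c X2 i = 0" using eq z1 by (metis add.inverse_neutral add.inverse_inverse)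
  qed
  have h1: "\<forall>e\<in>X1. c e = 0" using i1 z1 unfolding indep_def by blast
  have h2: "\<forall>e\<in>X2. c e = 0" using i2 z2 unfolding indep_def by blast
  show "c x = 0" using x h1 h2 by blast
qed

end

context tnn begin

lemma dimA: "dim_row A = k" "dim_col A = n" using A_carrier by auto

definition smat :: "nat list \<Rightarrow> real mat" where
  "smat xs = mat k k (\<lambda>(i,j). A $$ (i, xs ! j))"

lemma Lc_smat: "Lc A xs = det (smat xs)" unfolding Lc_def smat_def dimA by simp

lemma smat_carrier[simp]: "smat xs \<in> carrier_mat k k" unfolding smat_def by simp

lemma bij_sorted: "finite K \<Longrightarrow> card K = m \<Longrightarrow>
   bij_betw ((!) (sorted_list_of_set K)) {0..<m} K"
  by (rule bij_betw_nth) auto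

lemma sum_sorted:
  assumes "finite K" "card K = m"
  shows "(\<Sum>e\<in>K. f e) = (\<Sum>j\<in>{0..<m}. f (sorted_list_of_set K ! j))"
  using sum.reindex_bij_betw[OF bij_sorted[OF assms], of f] by simp

lemma lc_sorted:
  assumes "finite K" "card K = m"
  shows "lc c K i = (if i < k then (\<Sum>j\<in>{0..<m}. A $$ (i, sorted_list_of_set K ! j) * c (sorted_list_of_set K ! j)) else 0)"
  unfolding lc_def colv_def using sum_sorted[OF assms] by (auto simp: mult.commute)

lemma inv_sorted:
  assumes "finite K" "card K = m" "j < m"
  shows "inv_into {0..<m} ((!) (sorted_list_of_set K)) (sorted_list_of_set K ! j) = j"
  using bij_sorted[OF assms(1,2)] assms(3) by (simp add: bij_betw_def inv_into_f_f)

lemma sorted_elem: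
  assumes "finite K" "card K = m" "e \<in> K"
  shows "\<exists>j<m. e = sorted_list_of_set K ! j"
  using bij_sorted[OF assms(1,2)] assms(3) unfolding bij_betw_def by force

lemma kernel_dep:
  assumes iK: "indep K" and cK: "card K = m" and v: "v \<in> carrier_vec m"
    and z: "\<And>i. i < k \<Longrightarrow> (\<Sum>j\<in>{0..<m}. A $$ (i, sorted_list_of_set K ! j) * v $ j) = 0"
  shows "v = 0\<^sub>v m"
proof -
  have fK: "finite K" using iK indep_def by auto
  define c where "c e = v $ inv_into {0..<m} ((!) (sorted_list_of_set K)) e" for e
  have cj: "c (sorted_list_of_set K ! j) = v $ j" if "j < m" for j
    unfolding c_def using inv_sorted[OF fK cK that] by simp
  have "lc c K = (\<lambda>_. 0)"
  proof (rule ext)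
    fix i
    show "lc c K i = 0"
    proof (cases "i < k")
      case True
      have "lc c K i = (\<Sum>j\<in>{0..<m}. A $$ (i, sorted_list_of_set K ! j) * c (sorted_list_of_set K ! j))"
        using lc_sorted[OF fK cK] True by simp
      also have "\<dots> = (\<Sum>j\<in>{0..<m}. A $$ (i, sorted_list_of_set K ! j) * v $ j)"
        by (rule sum.cong) (auto simp: cj)
      finally show ?thesis using z[OF True] by simp
    qed (simp add: lc_sorted[OF fK cK])
  qed
  then have "\<forall>e\<in>K. c e = 0" using iK indep_def by blast
  then have "\<forall>j<m. v $ j = 0" using cj bij_sorted[OF fK cK] unfolding bij_betw_def by force
  then show ?thesis using v by (intro eq_vecI) auto
qed

lemma indep_det:
  assumes iK: "indep K" and cK: "card K = k"
  shows "Lc A (sorted_list_of_set K) \<noteq> 0"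
proof
  assume "Lc A (sorted_list_of_set K) = 0"
  then have "det (smat (sorted_list_of_set K)) = 0" by (simp add: Lc_smat)
  then obtain v where v: "v \<in> carrier_vec k" "v \<noteq> 0\<^sub>v k" "smat (sorted_list_of_set K) *\<^sub>v v = 0\<^sub>v k"
    using det_0_iff_vec_prod_zero_field[OF smat_carrier] by blast
  have "v = 0\<^sub>v k"
  proof (rule kernel_dep[OF iK cK v(1)])
    fix i assume i: "i < k"
    have "(smat (sorted_list_of_set K) *\<^sub>v v) $ i = 0" using v(3) i by simp
    then show "(\<Sum>j\<in>{0..<k}. A $$ (i, sorted_list_of_set K ! j) * v $ j) = 0"
      using i v(1) by (simp add: smat_def scalar_prod_def)
  qed
  then show False using v(2) by simp
qed

lemma det_indep:
  assumes fK: "finite K" and cK: "card K = k" and d: "Lc A (sorted_list_of_set K) \<noteq> 0"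
  shows "indep K"
  unfolding indep_def
proof (intro conjI allI impI ballI)
  show "finite K" by fact
  fix c e assume c: "lc c K = (\<lambda>_. 0)" and e: "e \<in> K"
  define v where "v = vec k (\<lambda>j. c (sorted_list_of_set K ! j))"
  have "smat (sorted_list_of_set K) *\<^sub>v v = 0\<^sub>v k"
  proof (rule eq_vecI)
    fix i assume "i < dim_vec (0\<^sub>v k :: real vec)"
    then have i: "i < k" by simp
    have "(smat (sorted_list_of_set K) *\<^sub>v v) $ i = lc c K i"
      using i lc_sorted[OF fK cK, of c i] by (simp add: smat_def scalar_prod_def v_def)
    then show "(smat (sorted_list_of_set K) *\<^sub>v v) $ i = 0\<^sub>v k $ i" using c i by simp
  qed (simp add: smat_def)
  moreover have "v \<in> carrier_vec k" by (simp add: v_def)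
  moreover have "det (smat (sorted_list_of_set K)) \<noteq> 0" using d by (simp add: Lc_smat)
  ultimately have "v = 0\<^sub>v k"
    using det_0_iff_vec_prod_zero_field[OF smat_carrier, of "sorted_list_of_set K"] by blast
  obtain j where j: "j < k" "e = sorted_list_of_set K ! j" using sorted_elem[OF fK cK e] by blast
  have "v $ j = 0" using \<open>v = 0\<^sub>v k\<close> j by simp
  then show "c e = 0" using j by (simp add: v_def)
qed

lemma indep_card:
  assumes iX: "indep X" shows "card X \<le> k"
proof (rule ccontr)
  assume "\<not> card X \<le> k"
  then obtain Y where Y: "Y \<subseteq> X" "card Y = Suc k"
    by (meson not_le less_eq_Suc_le obtain_subset_with_card_n)
  have iY: "indep Y" using indep_subset[OF iX Y(1)] .
  define N where "N = mat (Suc k) (Suc k) (\<lambda>(i,j). if i < k then A $$ (i, sorted_list_of_set Y ! j) else 0)"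
  have N: "N \<in> carrier_mat (Suc k) (Suc k)" unfolding N_def by simp
  have "det N = (\<Sum>j<Suc k. N $$ (k,j) * cofactor N k j)"
    by (rule laplace_expansion_row[OF N]) simp
  also have "\<dots> = 0" by (simp add: N_def)
  finally obtain v where v: "v \<in> carrier_vec (Suc k)" "v \<noteq> 0\<^sub>v (Suc k)" "N *\<^sub>v v = 0\<^sub>v (Suc k)"
    using det_0_iff_vec_prod_zero_field[OF N] by blast
  have "v = 0\<^sub>v (Suc k)"
  proof (rule kernel_dep[OF iY Y(2) v(1)])
    fix i assume i: "i < k"
    have "(N *\<^sub>v v) $ i = 0" using v(3) i by simp
    then show "(\<Sum>j\<in>{0..<Suc k}. A $$ (i, sorted_list_of_set Y ! j) * v $ j) = 0"
      using i v(1) by (simp add: N_def scalar_prod_def)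
  qed
  then show False using v(2) by simp
qed

lemma indep_basis_span:
  assumes iK: "indep K" and cK: "card K = k"
  shows "inspan (colv e) K"
proof (cases "e \<in> K")
  case True then show ?thesis using inspan_self iK indep_def by blast
next
  case False
  show ?thesis
  proof (rule ccontr)
    assume "\<not> inspan (colv e) K"
    then have "indep (insert e K)" using indep_insert iK False by blast
    then have "card (insert e K) \<le> k" by (rule indep_card)
    moreover have "card (insert e K) = Suc k" using False cK iK indep_def by auto
    ultimately show False by simp
  qed
qed

lemma sum_if_less:
  fixes m k' :: nat
  assumes "m \<le> k'"
  shows "(\<Sum>j\<in>{0..<k'}. if j < m then f j else (0::real)) = (\<Sum>j\<in>{0..<m}. f j)"
proof -
  have "(\<Sum>j\<in>{0..<k'}. if j < m then f j else 0) = (\<Sum>j\<in>{j\<in>{0..<k'}. j < m}. f j)"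
    using sum.inter_filter[OF finite_atLeastLessThan[of 0 k'], of "\<lambda>j. f j" "\<lambda>j. j < m"] by simp
  also have "{j\<in>{0..<k'}. j < m} = {0..<m}" using assms by auto
  finally show ?thesis .
qed

lemma low_rank_det:
  assumes iK: "indep K" and cK: "card K < k" and fB: "finite B" and cB: "card B = k"
    and sp: "\<forall>e\<in>B. inspan (colv e) K"
  shows "Lc A (sorted_list_of_set B) = 0"
proof -
  have fK: "finite K" using iK indep_def by auto
  define m where "m = card K"
  obtain d where d: "\<And>e. e \<in> B \<Longrightarrow> colv e = lc (d e) K" using sp unfolding inspan_def by metis
  define sK where "sK = sorted_list_of_set K"
  define sB where "sB = sorted_list_of_set B"
  define P1 where "P1 = mat k k (\<lambda>(i,j). if j < m then A $$ (i, sK ! j) else 0)"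
  define P2 where "P2 = mat k k (\<lambda>(j,l). if j < m then d (sB ! l) (sK ! j) else 0)"
  have P1: "P1 \<in> carrier_mat k k" and P2: "P2 \<in> carrier_mat k k" unfolding P1_def P2_def by auto
  have mk: "m < k" using cK m_def by simp
  have "det P1 = (\<Sum>i<k. P1 $$ (i,m) * cofactor P1 i m)"
    by (rule laplace_expansion_column[OF P1 mk])
  also have "\<dots> = 0" using mk by (auto intro!: sum.neutral simp: P1_def)
  finally have d1: "det P1 = 0" .
  have sBl: "sB ! l \<in> B" if "l < k" for l
    using that cB fB unfolding sB_def by (metis length_sorted_list_of_set nth_mem set_sorted_list_of_set)
  have prod: "P1 * P2 = smat sB"
  proof (rule eq_matI)
    fix i l assume i: "i < dim_row (smat sB)" and l: "l < dim_col (smat sB)"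
    then have ik: "i < k" and lk: "l < k" by (auto simp: smat_def)
    have "(P1 * P2) $$ (i,l) = (\<Sum>j\<in>{0..<k}. P1 $$ (i,j) * P2 $$ (j,l))"
      using ik lk P1 P2 by (simp add: scalar_prod_def)
    also have "\<dots> = (\<Sum>j\<in>{0..<k}. if j < m then A $$ (i, sK ! j) * d (sB ! l) (sK ! j) else 0)"
      by (rule sum.cong) (auto simp: P1_def P2_def ik lk)
    also have "\<dots> = (\<Sum>j\<in>{0..<m}. A $$ (i, sK ! j) * d (sB ! l) (sK ! j))"
      by (rule sum_if_less) (use mk in simp)
    also have "\<dots> = lc (d (sB ! l)) K i" using lc_sorted[OF fK m_def[symmetric]] ik by (simp add: sK_def)
    also have "\<dots> = colv (sB ! l) i" using d[OF sBl[OF lk]] by simp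
    also have "\<dots> = smat sB $$ (i,l)" using ik lk by (simp add: colv_def smat_def)
    finally show "(P1 * P2) $$ (i,l) = smat sB $$ (i,l)" .
  qed (auto simp: P1_def P2_def smat_def)
  have "det (smat sB) = det P1 * det P2" using det_mult[OF P1 P2] prod by simp
  then show ?thesis using d1 by (simp add: Lc_smat sB_def)
qed

end

context tnn begin

lemma rank_basis:
  assumes rk: "vec_space.rank k A = k"
  shows "\<exists>B0. B0 \<subseteq> {0..<n} \<and> card B0 = k \<and> Lc A (sorted_list_of_set B0) \<noteq> 0"
proof -
  interpret vs: vec_space "TYPE(real)" k .
  have e: "vs.lin_indpt {}" by (rule vs.finite_lin_indpt2) auto
  have "\<exists>S. finite S \<and> maximal S (\<lambda>T. T \<subseteq> set (cols A) \<and> vs.lin_indpt T)"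
  proof (rule maximal_exists[where N = "card (set (cols A))" and B = "{}"])
    fix T assume "T \<subseteq> set (cols A) \<and> vs.lin_indpt T"
    then have "T \<subseteq> set (cols A)" by blast
    then show "finite T \<and> card T \<le> card (set (cols A))"
      using finite_subset[of T "set (cols A)"] card_mono[of "set (cols A)" T] by simp
  next
    show "{} \<subseteq> set (cols A) \<and> vs.lin_indpt {}" using e by simp
  qed
  then obtain S where S: "maximal S (\<lambda>T. T \<subseteq> set (cols A) \<and> vs.lin_indpt T)" by blast
  have cS: "card S = k" using vs.rank_card_indpt[OF A_carrier S] rk by simp
  have SP: "S \<subseteq> set (cols A) \<and> vs.lin_indpt S" using S unfolding maximal_def by (rule conjunct1)
  have Ssub: "S \<subseteq> set (cols A)" using SP by (rule conjunct1)
  have Sli: "vs.lin_indpt S" using SP by (rule conjunct2)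
  have setcols: "set (cols A) = col A ` {0..<n}" using dimA by (simp add: cols_def)
  have ex: "\<forall>s\<in>S. \<exists>e. e < n \<and> col A e = s"
  proof
    fix s assume "s \<in> S"
    then have "s \<in> col A ` {0..<n}" using Ssub setcols by blast
    then show "\<exists>e. e < n \<and> col A e = s" by force
  qed
  obtain f where fall: "\<forall>s\<in>S. f s < n \<and> col A (f s) = s" using bchoice[OF ex] by blast
  have f: "f s < n \<and> col A (f s) = s" if "s \<in> S" for s using fall that by blast
  have injf: "inj_on f S"
  proof (rule inj_onI)
    fix x y assume xy: "x \<in> S" "y \<in> S" "f x = f y"
    have "x = col A (f x)" using f[OF xy(1)] by simp
    also have "\<dots> = col A (f y)" using xy(3) by simp
    also have "\<dots> = y" using f[OF xy(2)] by simp
    finally show "x = y" .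
  qed
  define K where "K = f ` S"
  have fS: "finite S" by (rule finite_subset[OF Ssub]) simp
  have cK: "card K = k" unfolding K_def using card_image[OF injf] cS by simp
  have Ksub: "K \<subseteq> {0..<n}"
  proof
    fix e assume "e \<in> K"
    then obtain s where "s \<in> S" "e = f s" unfolding K_def by blast
    then show "e \<in> {0..<n}" using f by simp
  qed
  have fK: "finite K" unfolding K_def using fS by simp
  have injc: "inj_on (col A) K"
  proof (rule inj_onI)
    fix x y assume x: "x \<in> K" and y: "y \<in> K" and e: "col A x = col A y"
    obtain s1 where s1: "s1 \<in> S" "x = f s1" using x K_def by blast
    obtain s2 where s2: "s2 \<in> S" "y = f s2" using y K_def by blast
    have "s1 = col A (f s1)" using f[OF s1(1)] by simp
    also have "\<dots> = col A (f s2)" using e s1(2) s2(2) by simp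
    also have "\<dots> = s2" using f[OF s2(1)] by simp
    finally have "s1 = s2" .
    then show "x = y" using s1 s2 by simp
  qed
  have colK: "col A ` K = S"
  proof -
    have "col A ` K = (\<lambda>s. col A (f s)) ` S" unfolding K_def image_image by simp
    also have "\<dots> = (\<lambda>s. s) ` S" using f by (intro image_cong) auto
    finally show ?thesis by simp
  qed
  define sK where "sK = sorted_list_of_set K"
  define M where "M = smat sK"
  have M: "M \<in> carrier_mat k k" unfolding M_def by simp
  have bij: "bij_betw ((!) sK) {0..<k} K" unfolding sK_def by (rule bij_sorted[OF fK cK])
  have colM: "col M j = col A (sK ! j)" if "j < k" for j
  proof -
    have "sK ! j \<in> K" using bij that unfolding bij_betw_def by auto
    then have "sK ! j < n" using Ksub by auto
    then show ?thesis by (intro eq_vecI) (use that dimA in \<open>auto simp: M_def smat_def\<close>)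
  qed
  have colsM: "cols M = map (\<lambda>j. col A (sK ! j)) [0..<k]"
  proof -
    have "cols M = map (col M) [0..<k]" using M by (simp add: cols_def)
    also have "\<dots> = map (\<lambda>j. col A (sK ! j)) [0..<k]" by (rule map_cong) (auto simp: colM)
    finally show ?thesis .
  qed
  have setM: "set (cols M) = S"
  proof -
    have "set (cols M) = (\<lambda>j. col A (sK ! j)) ` {0..<k}" using colsM by simp
    also have "\<dots> = col A ` ((!) sK ` {0..<k})" by (simp add: image_image)
    also have "(!) sK ` {0..<k} = K" using bij by (simp add: bij_betw_def)
    finally show ?thesis using colK by simp
  qed
  have distM: "distinct (cols M)"
  proof -
    have i1: "inj_on ((!) sK) {0..<k}" using bij by (simp add: bij_betw_def)
    have i2: "inj_on (col A) ((!) sK ` {0..<k})" using bij injc by (simp add: bij_betw_def)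
    have "inj_on (col A \<circ> (!) sK) {0..<k}" by (rule comp_inj_on[OF i1 i2])
    then have "inj_on (\<lambda>j. col A (sK ! j)) {0..<k}" by (simp add: o_def)
    then show ?thesis using colsM by (simp add: distinct_map)
  qed
  have "vs.rank M = k" using vs.lin_indpt_full_rank[OF M distM] setM Sli by simp
  then have "det M \<noteq> 0" using vs.det_rank_iff[OF M] by simp
  then show ?thesis using Ksub cK by (intro exI[of _ K]) (simp add: Lc_smat M_def sK_def)
qed

lemma extend_basis:
  assumes rk: "vec_space.rank k A = k" and Xn: "X \<subseteq> {0..<n}" and iX: "indep X"
  shows "\<exists>K. X \<subseteq> K \<and> K \<subseteq> {0..<n} \<and> card K = k \<and> indep K"
proof -
  obtain K where K: "X \<subseteq> K" "K \<subseteq> {0..<n}" "indep K" "\<forall>e\<in>{0..<n}. inspan (colv e) K"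
    using max_indep[of "{0..<n}" X] Xn iX by blast
  obtain B0 where B0: "B0 \<subseteq> {0..<n}" "card B0 = k" "Lc A (sorted_list_of_set B0) \<noteq> 0"
    using rank_basis[OF rk] by blast
  have le: "card K \<le> k" using indep_card[OF K(3)] .
  have "\<not> card K < k"
  proof
    assume "card K < k"
    moreover have "finite B0" by (rule finite_subset[OF B0(1)]) simp
    moreover have "\<forall>e\<in>B0. inspan (colv e) K" using B0(1) K(4) by blast
    ultimately have "Lc A (sorted_list_of_set B0) = 0"
      using low_rank_det[OF K(3) _ _ B0(2)] by blast
    then show False using B0(3) by simp
  qed
  then show ?thesis using K le by (intro exI[of _ K]) auto
qed

lemma P_char:
  assumes rk: "vec_space.rank k A = k" and P: "P = matrix_matroid A"
  shows "X \<in> P \<longleftrightarrow> X \<subseteq> {0..<n} \<and> indep X"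
proof
  assume "X \<in> P"
  then obtain B where B: "B \<subseteq> {0..<n}" "card B = k" "max_minor A B \<noteq> 0" "X \<subseteq> B"
    using P dimA unfolding matrix_matroid_def matrix_bases_def by auto
  have fB: "finite B" by (rule finite_subset[OF B(1)]) simp
  have "indep B" using det_indep[OF fB B(2)] B(3) by (simp add: max_minor_Lc)
  then show "X \<subseteq> {0..<n} \<and> indep X" using B indep_subset by blast
next
  assume "X \<subseteq> {0..<n} \<and> indep X"
  then obtain K where K: "X \<subseteq> K" "K \<subseteq> {0..<n}" "card K = k" "indep K"
    using extend_basis[OF rk] by blast
  have "max_minor A K \<noteq> 0" using indep_det[OF K(4,3)] by (simp add: max_minor_Lc)
  then show "X \<in> P" using P K dimA unfolding matrix_matroid_def matrix_bases_def by auto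
qed

end

lemma cofactor_col_indep:
  assumes "j0 < k"
  shows "cofactor (mat k k (\<lambda>(i,j). if j = j0 then u i else F i j)) i j0 =
         cofactor (mat k k (\<lambda>(i,j). if j = j0 then u' i else F i j)) i j0"
proof -
  have "mat_delete (mat k k (\<lambda>(i,j). if j = j0 then u i else F i j)) i j0 =
        mat_delete (mat k k (\<lambda>(i,j). if j = j0 then u' i else F i j)) i j0"
    by (rule eq_matI) (auto simp: mat_delete_def)
  then show ?thesis unfolding cofactor_def by simp
qed

lemma det_col_lin:
  fixes F :: "nat \<Rightarrow> nat \<Rightarrow> real"
  assumes j0: "j0 < k" and fY: "finite Y"
  shows "det (mat k k (\<lambda>(i,j). if j = j0 then (\<Sum>y\<in>Y. a y * f y i) else F i j)) =
         (\<Sum>y\<in>Y. a y * det (mat k k (\<lambda>(i,j). if j = j0 then f y i else F i j)))"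
proof -
  define Cf where "Cf i = cofactor (mat k k (\<lambda>(i,j). if j = j0 then (\<lambda>_. 0) i else F i j)) i j0" for i
  have lap: "det (mat k k (\<lambda>(i,j). if j = j0 then u i else F i j)) = (\<Sum>i<k. u i * Cf i)" for u
  proof -
    have "det (mat k k (\<lambda>(i,j). if j = j0 then u i else F i j)) =
      (\<Sum>i<k. (mat k k (\<lambda>(i,j). if j = j0 then u i else F i j)) $$ (i,j0) *
          cofactor (mat k k (\<lambda>(i,j). if j = j0 then u i else F i j)) i j0)"
      by (rule laplace_expansion_column[OF _ j0]) simp
    also have "\<dots> = (\<Sum>i<k. u i * Cf i)"
      by (rule sum.cong) (use j0 in \<open>auto simp: Cf_def intro: cofactor_col_indep\<close>)
    finally show ?thesis .
  qed
  have "det (mat k k (\<lambda>(i,j). if j = j0 then (\<Sum>y\<in>Y. a y * f y i) else F i j)) =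
     (\<Sum>i<k. (\<Sum>y\<in>Y. a y * f y i) * Cf i)" by (rule lap)
  also have "\<dots> = (\<Sum>i<k. \<Sum>y\<in>Y. a y * (f y i * Cf i))"
    by (simp add: sum_distrib_right mult.assoc)
  also have "\<dots> = (\<Sum>y\<in>Y. \<Sum>i<k. a y * (f y i * Cf i))" by (rule sum.swap)
  also have "\<dots> = (\<Sum>y\<in>Y. a y * (\<Sum>i<k. f y i * Cf i))" by (simp add: sum_distrib_left)
  also have "\<dots> = (\<Sum>y\<in>Y. a y * det (mat k k (\<lambda>(i,j). if j = j0 then f y i else F i j)))"
    by (simp add: lap)
  finally show ?thesis .
qed

context tnn begin

lemma sign2:
  assumes fX: "finite X" and p: "p \<notin> X" and q: "q \<notin> X" and pq: "p \<noteq> q"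
    and cX: "Suc (Suc (card X)) = k"
  shows "Lc A (sorted_list_of_set (insert p (insert q X))) =
    (-1)^(card {y\<in>X. p < y} + card {y\<in>X. q < y} + (if q < p then 1 else 0)) *
      Lc A (sorted_list_of_set X @ [p, q])"
proof -
  have c1: "card (insert q X) = Suc (card X)" using fX q by simp
  have 1: "Lc A (sorted_list_of_set (insert p (insert q X)) @ []) =
     (-1)^(card {y\<in>insert q X. p < y}) * Lc A (sorted_list_of_set (insert q X) @ p # [])"
    by (rule Lc_insert) (use fX p pq cX c1 dimA in auto)
  have 2: "Lc A (sorted_list_of_set (insert q X) @ [p]) =
     (-1)^(card {y\<in>X. q < y}) * Lc A (sorted_list_of_set X @ q # [p])"
    by (rule Lc_insert) (use fX q cX dimA in auto)
  have 3: "Lc A (sorted_list_of_set X @ q # p # []) = - Lc A (sorted_list_of_set X @ p # q # [])"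
    by (rule Lc_swap) (use fX cX dimA in auto)
  have c2: "card {y\<in>insert q X. p < y} = card {y\<in>X. p < y} + (if p < q then 1 else 0)"
  proof (cases "p < q")
    case True
    then have "{y\<in>insert q X. p < y} = insert q {y\<in>X. p < y}" by auto
    then show ?thesis using True fX q by simp
  next
    case False
    then have "{y\<in>insert q X. p < y} = {y\<in>X. p < y}" by auto
    then show ?thesis using False by simp
  qed
  show ?thesis
  proof (cases "p < q")
    case True
    then show ?thesis using 1 2 3 c2 pq by (simp add: power_add)
  next
    case False
    then have "q < p" using pq by simp
    then show ?thesis using 1 2 3 c2 False by (simp add: power_add)
  qed
qed

definition Qv :: "nat set \<Rightarrow> (nat \<Rightarrow> real) \<Rightarrow> (nat \<Rightarrow> real) \<Rightarrow> real" where
  "Qv X u w = det (mat k k (\<lambda>(i,j). if j = k - 2 then u i else if j = k - 1 then w i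
       else A $$ (i, sorted_list_of_set X ! j)))"

lemma Qv_alt:
  assumes "2 \<le> k"
  shows "Qv X u w = det (mat k k (\<lambda>(i,j). if j = k - 1 then w i else if j = k - 2 then u i
       else A $$ (i, sorted_list_of_set X ! j)))"
  unfolding Qv_def by (rule arg_cong[of _ _ det]) (rule eq_matI, use assms in auto)

lemma Lc_Qv:
  assumes fX: "finite X" and cX: "Suc (Suc (card X)) = k"
  shows "Lc A (sorted_list_of_set X @ [p, q]) = Qv X (colv p) (colv q)"
  unfolding Lc_def Qv_def dimA
  by (rule arg_cong[of _ _ det]) (rule eq_matI, use cX in \<open>auto simp: nth_append colv_def\<close>)

lemma Qv_lin1:
  assumes k2: "2 \<le> k" and fY: "finite Y"
  shows "Qv X (\<lambda>i. \<Sum>y\<in>Y. a y * f y i) w = (\<Sum>y\<in>Y. a y * Qv X (f y) w)"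
  unfolding Qv_def
  using det_col_lin[of "k - 2" k Y a f "\<lambda>i j. if j = k - 1 then w i else A $$ (i, sorted_list_of_set X ! j)"] k2 fY
  by simp

lemma Qv_lin2:
  assumes k2: "2 \<le> k" and fY: "finite Y"
  shows "Qv X u (\<lambda>i. \<Sum>y\<in>Y. a y * f y i) = (\<Sum>y\<in>Y. a y * Qv X u (f y))"
  unfolding Qv_alt[OF k2]
  using det_col_lin[of "k - 1" k Y a f "\<lambda>i j. if j = k - 2 then u i else A $$ (i, sorted_list_of_set X ! j)"] k2 fY
  by simp

lemma Qv_van1:
  assumes fX: "finite X" and cX: "Suc (Suc (card X)) = k" and y: "y \<in> X"
  shows "Qv X (colv y) w = 0"
proof -
  obtain jy where jy: "jy < card X" "y = sorted_list_of_set X ! jy"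
    using sorted_elem[OF fX refl y] by blast
  have cv: "colv y i = A $$ (i, sorted_list_of_set X ! jy)" if "i < k" for i
    using jy that by (simp add: colv_def)
  have nums: "jy < k - 2" "k - 2 < k" "jy \<noteq> k - 2" "jy \<noteq> k - 1" using jy cX by auto
  show ?thesis unfolding Qv_def
    by (rule det_identical_columns[of _ k "k - 2" jy]) (use nums cv in auto)
qed

lemma Qv_van2:
  assumes fX: "finite X" and cX: "Suc (Suc (card X)) = k" and y: "y \<in> X"
  shows "Qv X u (colv y) = 0"
proof -
  obtain jy where jy: "jy < card X" "y = sorted_list_of_set X ! jy"
    using sorted_elem[OF fX refl y] by blast
  have cv: "colv y i = A $$ (i, sorted_list_of_set X ! jy)" if "i < k" for i
    using jy that by (simp add: colv_def)
  have nums: "jy < k - 2" "k - 1 < k" "jy \<noteq> k - 2" "jy \<noteq> k - 1" "k - 2 \<noteq> k - 1" using jy cX by auto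
  show ?thesis unfolding Qv_def
    by (rule det_identical_columns[of _ k "k - 1" jy]) (use nums cv in auto)
qed

lemma Qv_same:
  assumes "2 \<le> k"
  shows "Qv X u u = 0"
  unfolding Qv_def
  by (rule det_identical_columns[of _ k "k - 2" "k - 1"]) (use assms in auto)

end

lemma neg_one_parity:
  assumes "even (E1 + E2)"
  shows "(-1::real)^E1 = (-1)^E2"
  using assms by (cases "even E1") (auto simp: neg_one_even_power neg_one_odd_power)

context tnn begin

lemma lemmaA:
  assumes pos: "\<forall>S. S \<subseteq> {0..<n} \<and> card S = k \<longrightarrow> max_minor A S \<ge> 0"
    and iB: "indep B" and cB: "card B = k" and Bn: "B \<subseteq> {0..<n}"
    and x: "x \<in> B" and b: "b \<in> B" and xb: "x \<noteq> b"
    and zn: "z < n" and dn: "d < n" and zB: "z \<notin> B" and dB: "d \<notin> B" and zd: "z \<noteq> d"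
    and cz: "colv z = lc c B" and cx: "c x \<noteq> 0" and cb: "c b = 0"
    and ed: "colv d = lc e B"
    and par: "even ((if b < x then 1 else 0) + (if d < z then 1 else 0) + (if d < x then 1 else 0)
                 + (if z < b then (1::nat) else 0))"
  shows "e b = 0"
proof -
  define X where "X = B - {x, b}"
  have fB: "finite B" using iB by (rule indep_finite)
  have fX: "finite X" unfolding X_def using fB by simp
  have BX: "B = insert x (insert b X)" unfolding X_def using x b by auto
  have xX: "x \<notin> X" and bX: "b \<notin> X" unfolding X_def by auto
  have cX: "Suc (Suc (card X)) = k" using cB BX fX xX bX xb by simp
  have k2: "2 \<le> k" using cX by simp
  have zX: "z \<notin> X" and dX: "d \<notin> X" using zB dB unfolding X_def by auto
  define g where "g t = card {y\<in>X. t < y}" for t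
  define sg where "sg p q = (-1::real)^(g p + g q + (if q < p then 1 else 0))" for p q
  have Del: "max_minor A (insert p (insert q X)) = sg p q * Qv X (colv p) (colv q)"
    if "p \<notin> X" "q \<notin> X" "p \<noteq> q" for p q
    using sign2[OF fX that cX] Lc_Qv[OF fX cX, of p q] by (simp add: max_minor_Lc sg_def g_def)
  have cardk: "card (insert p (insert q X)) = k" if "p \<notin> X" "q \<notin> X" "p \<noteq> q" for p q
    using that fX cX by simp
  have Xn: "X \<subseteq> {0..<n}" using Bn unfolding X_def by auto
  have posk: "max_minor A (insert p (insert q X)) \<ge> 0" if "p \<notin> X" "q \<notin> X" "p \<noteq> q" "p < n" "q < n" for p q
    using pos cardk[OF that(1-3)] that(4,5) Xn by auto
  have sumB: "(\<Sum>y\<in>B. a y * h y) = a x * h x + a b * h b + (\<Sum>y\<in>X. a y * h y)" for a :: "nat \<Rightarrow> real" and h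
    using BX fX xX bX xb by simp
  have zsum: "colv z = (\<lambda>i. \<Sum>y\<in>B. c y * colv y i)" using cz unfolding lc_def .
  have dsum: "colv d = (\<lambda>i. \<Sum>y\<in>B. e y * colv y i)" using ed unfolding lc_def .
  have lin1: "Qv X (colv z) w = c x * Qv X (colv x) w" for w
  proof -
    have "Qv X (colv z) w = (\<Sum>y\<in>B. c y * Qv X (colv y) w)"
      unfolding zsum by (rule Qv_lin1[OF k2 fB])
    also have "\<dots> = c x * Qv X (colv x) w + c b * Qv X (colv b) w + (\<Sum>y\<in>X. c y * Qv X (colv y) w)"
      by (rule sumB)
    also have "(\<Sum>y\<in>X. c y * Qv X (colv y) w) = 0"
      using Qv_van1[OF fX cX] by simp
    finally show ?thesis using cb by simp
  qed
  have lin2z: "Qv X u (colv z) = c x * Qv X u (colv x)" for u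
  proof -
    have "Qv X u (colv z) = (\<Sum>y\<in>B. c y * Qv X u (colv y))"
      unfolding zsum by (rule Qv_lin2[OF k2 fB])
    also have "\<dots> = c x * Qv X u (colv x) + c b * Qv X u (colv b) + (\<Sum>y\<in>X. c y * Qv X u (colv y))"
      by (rule sumB)
    also have "(\<Sum>y\<in>X. c y * Qv X u (colv y)) = 0"
      using Qv_van2[OF fX cX] by simp
    finally show ?thesis using cb by simp
  qed
  have lin2d: "Qv X u (colv d) = e x * Qv X u (colv x) + e b * Qv X u (colv b)" for u
  proof -
    have "Qv X u (colv d) = (\<Sum>y\<in>B. e y * Qv X u (colv y))"
      unfolding dsum by (rule Qv_lin2[OF k2 fB])
    also have "\<dots> = e x * Qv X u (colv x) + e b * Qv X u (colv b) + (\<Sum>y\<in>X. e y * Qv X u (colv y))"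
      by (rule sumB)
    also have "(\<Sum>y\<in>X. e y * Qv X u (colv y)) = 0"
      using Qv_van2[OF fX cX] by simp
    finally show ?thesis by simp
  qed
  define D where "D = Qv X (colv x) (colv b)"
  have anti: "Qv X (colv b) (colv x) = - D"
  proof -
    have "Lc A (sorted_list_of_set X @ b # x # []) = - Lc A (sorted_list_of_set X @ x # b # [])"
      by (rule Lc_swap) (use fX cX dimA in auto)
    then show ?thesis using Lc_Qv[OF fX cX] by (simp add: D_def)
  qed
  have Qxx: "Qv X (colv x) (colv x) = 0" by (rule Qv_same[OF k2])
  have Qzd: "Qv X (colv z) (colv d) = c x * e b * D"
    using lin1[of "colv d"] lin2d[of "colv x"] Qxx by (simp add: D_def)
  have Qxd: "Qv X (colv x) (colv d) = e b * D"
    using lin2d[of "colv x"] Qxx by (simp add: D_def)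
  have Qbz: "Qv X (colv b) (colv z) = - (c x * D)"
    using lin2z[of "colv b"] anti by simp
  have m0: "max_minor A B = sg x b * D" using Del[OF xX bX xb] BX by (simp add: D_def)
  have D0: "D \<noteq> 0"
  proof
    assume "D = 0"
    then have "max_minor A B = 0" using m0 by simp
    then show False using indep_det[OF iB cB] by (simp add: max_minor_Lc)
  qed
  have xn: "x < n" and bn: "b < n" using x b Bn by auto
  have zx: "z \<noteq> x" "z \<noteq> b" "d \<noteq> x" "d \<noteq> b" using zB dB x b by auto
  have m1: "max_minor A (insert z (insert d X)) = sg z d * (c x * e b * D)"
    using Del[OF zX dX zd] Qzd by simp
  have m2: "max_minor A (insert x (insert d X)) = sg x d * (e b * D)"
    using Del[OF xX dX zx(3)[symmetric]] Qxd by simp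
  have m3: "max_minor A (insert b (insert z X)) = sg b z * (- (c x * D))"
    using Del[OF bX zX zx(2)[symmetric]] Qbz by simp
  have p0: "max_minor A B \<ge> 0" using posk[OF xX bX xb xn bn] BX by simp
  have p1: "max_minor A (insert z (insert d X)) \<ge> 0" using posk[OF zX dX zd zn dn] .
  have p2: "max_minor A (insert x (insert d X)) \<ge> 0" using posk[OF xX dX zx(3)[symmetric] xn dn] .
  have p3: "max_minor A (insert b (insert z X)) \<ge> 0" using posk[OF bX zX zx(2)[symmetric] bn zn] .
  have sgeq: "sg x b * sg z d = sg x d * sg b z"
  proof -
    have "sg x b * sg z d = (-1::real)^((g x + g b + (if b < x then 1 else 0)) + (g z + g d + (if d < z then 1 else 0)))"
      unfolding sg_def by (simp add: power_add)
    also have "\<dots> = (-1::real)^((g x + g d + (if d < x then 1 else 0)) + (g b + g z + (if z < b then 1 else 0)))"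
      by (rule neg_one_parity) (use par in presburger)
    also have "\<dots> = sg x d * sg b z" unfolding sg_def by (simp add: power_add)
    finally show ?thesis .
  qed
  have sgnz: "sg x b * sg z d \<noteq> 0" unfolding sg_def by simp
  define T where "T = sg x b * sg z d * c x * e b * D * D"
  have T1: "max_minor A B * max_minor A (insert z (insert d X)) = T"
    unfolding m0 m1 T_def by (simp add: algebra_simps)
  have T2: "max_minor A (insert x (insert d X)) * max_minor A (insert b (insert z X)) = - T"
    unfolding m2 m3 T_def using sgeq by (simp add: algebra_simps)
  have "T \<ge> 0" using T1 p0 p1 by (metis mult_nonneg_nonneg)
  moreover have "- T \<ge> 0" using T2 p2 p3 by (metis mult_nonneg_nonneg)
  ultimately have "T = 0" by simp
  then show ?thesis using sgnz cx D0 unfolding T_def by simp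
qed

end

definition rpos :: "nat \<Rightarrow> nat \<Rightarrow> nat \<Rightarrow> nat" where
  "rpos a n e = (e + n - a) mod n"

lemma rpos_eq: "a < n \<Longrightarrow> e < n \<Longrightarrow> rpos a n e = (if a \<le> e then e - a else e + n - a)"
  unfolding rpos_def by (auto simp: mod_if)

lemma rpos_lt: "a < n \<Longrightarrow> rpos a n e < n"
  unfolding rpos_def by simp

lemma rpos_add: "a < n \<Longrightarrow> i < n \<Longrightarrow> rpos a n ((a + i) mod n) = i"
proof -
  assume a: "a < n" and i: "i < n"
  have m: "(a + i) mod n = (if a + i < n then a + i else a + i - n)"
    using a i by (auto simp: mod_if)
  have lt: "(a + i) mod n < n" using a by simp
  show ?thesis using rpos_eq[OF a lt] m a i by auto
qed

lemma rpos_inv: "a < n \<Longrightarrow> e < n \<Longrightarrow> (a + rpos a n e) mod n = e"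
  using rpos_eq[of a n e] by (auto simp: mod_if)

lemma rpos_inj: "a < n \<Longrightarrow> e1 < n \<Longrightarrow> e2 < n \<Longrightarrow> rpos a n e1 = rpos a n e2 \<Longrightarrow> e1 = e2"
  using rpos_inv by metis

lemma parity_pos:
  fixes a n x b z d :: nat
  assumes "x < n" "b < n" "z < n" "d < n" "a < n"
    and "rpos a n x < rpos a n b" "rpos a n b < rpos a n z"
    and "rpos a n d < rpos a n x \<or> rpos a n z < rpos a n d"
  shows "even ((if b < x then 1 else 0) + (if d < z then 1 else 0) + (if d < x then 1 else 0)
                 + (if z < b then (1::nat) else 0))"
  using assms by (auto simp: rpos_eq split: if_splits)

lemma I_char:
  assumes a: "a < n" and m: "m \<le> n" and I: "I = {(a + i) mod n | i. i < m}"
  shows "e \<in> I \<longleftrightarrow> e < n \<and> rpos a n e < m"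
proof
  assume "e \<in> I"
  then obtain i where i: "i < m" "e = (a + i) mod n" using I by blast
  then show "e < n \<and> rpos a n e < m" using a m rpos_add[OF a, of i] by auto
next
  assume e: "e < n \<and> rpos a n e < m"
  then have "e = (a + rpos a n e) mod n" using rpos_inv[OF a] by simp
  then show "e \<in> I" using I e by blast
qed

lemma ci_of_gapless:
  assumes a: "a < n" and m: "m \<le> n" and I: "I = {(a + i) mod n | i. i < m}"
    and CI: "C \<subseteq> I" and Cne: "C \<noteq> {}"
    and H: "\<forall>t\<in>I. (\<exists>x\<in>C. rpos a n x < rpos a n t) \<and> (\<exists>z\<in>C. rpos a n t < rpos a n z) \<longrightarrow> t \<in> C"
  shows "cyclic_interval n C"
proof -
  let ?p = "rpos a n"
  have In: "\<And>e. e \<in> I \<Longrightarrow> e < n \<and> ?p e < m" using I_char[OF a m I] by blast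
  have Cn: "C \<subseteq> {0..<n}" using CI In by fastforce
  have fC: "finite C" by (rule finite_subset[OF Cn]) simp
  define p0 where "p0 = Min (?p ` C)"
  define p1 where "p1 = Max (?p ` C)"
  have "p0 \<in> ?p ` C" unfolding p0_def using fC Cne by (intro Min_in) auto
  then obtain c0 where c0': "c0 \<in> C" "p0 = ?p c0" by blast
  have c0: "c0 \<in> C" "?p c0 = p0" using c0' by auto
  have "p1 \<in> ?p ` C" unfolding p1_def using fC Cne by (intro Max_in) auto
  then obtain c1 where c1': "c1 \<in> C" "p1 = ?p c1" by blast
  have c1: "c1 \<in> C" "?p c1 = p1" using c1' by auto
  have rng: "p0 \<le> ?p c \<and> ?p c \<le> p1" if "c \<in> C" for c
    using that fC unfolding p0_def p1_def by auto
  have p1m: "p1 < m" using c1 CI In by auto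
  have p01: "p0 \<le> p1" using rng[OF c0(1)] c0 by simp
  define a' where "a' = (a + p0) mod n"
  have a': "a' < n" unfolding a'_def using a by simp
  have "C = {(a' + i) mod n | i. i < p1 - p0 + 1}"
  proof
    show "C \<subseteq> {(a' + i) mod n | i. i < p1 - p0 + 1}"
    proof
      fix c assume c: "c \<in> C"
      have cn: "c < n" using c CI In by auto
      have "c = (a + ?p c) mod n" using rpos_inv[OF a cn] by simp
      also have "a + ?p c = a + p0 + (?p c - p0)" using rng[OF c] by simp
      also have "(a + p0 + (?p c - p0)) mod n = (a' + (?p c - p0)) mod n"
        unfolding a'_def by (simp add: mod_add_left_eq)
      finally have ceq: "c = (a' + (?p c - p0)) mod n" .
      have "?p c - p0 < p1 - p0 + 1" using rng[OF c] by linarith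
      then show "c \<in> {(a' + i) mod n | i. i < p1 - p0 + 1}" using ceq by blast
    qed
  next
    show "{(a' + i) mod n | i. i < p1 - p0 + 1} \<subseteq> C"
    proof
      fix e assume "e \<in> {(a' + i) mod n | i. i < p1 - p0 + 1}"
      then obtain i where i: "i < p1 - p0 + 1" "e = (a' + i) mod n" by blast
      have e: "e = (a + (p0 + i)) mod n" using i(2) unfolding a'_def by (simp add: mod_add_left_eq add.assoc)
      have pi: "p0 + i \<le> p1" using i(1) p01 by simp
      have pe: "?p e = p0 + i" using e rpos_add[OF a, of "p0 + i"] pi p1m m by simp
      have en: "e < n" using e a by simp
      have eI: "e \<in> I" using I_char[OF a m I] en pe pi p1m by simp
      show "e \<in> C"
      proof (cases "?p e = p0")
        case True
        then have "e = c0" using rpos_inj[OF a en, of c0] c0 CI In by auto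
        then show ?thesis using c0 by simp
      next
        case False
        show ?thesis
        proof (cases "?p e = p1")
          case True
          then have "e = c1" using rpos_inj[OF a en, of c1] c1 CI In by auto
          then show ?thesis using c1 by simp
        next
          case False2: False
          have "?p c0 < ?p e" using c0 pe False by simp
          moreover have "?p e < ?p c1" using c1 pe pi False2 by simp
          ultimately show ?thesis using H eI c0(1) c1(1) by blast
        qed
      qed
    qed
  qed
  moreover have "p1 - p0 + 1 \<le> n" using p1m m by simp
  ultimately show ?thesis unfolding cyclic_interval_def using a' by blast
qed

context tnn begin

lemma indep_empty: "indep {}" unfolding indep_def by simp

lemma lc_delta: "finite X \<Longrightarrow> e \<in> X \<Longrightarrow> lc (\<lambda>y. if y = e then 1 else 0) X = colv e"
proof -
  assume fX: "finite X" and eX: "e \<in> X"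
  show ?thesis
  proof (rule ext)
    fix i
    have "lc (\<lambda>y. if y = e then 1 else 0) X i = (\<Sum>y\<in>X. if y = e then colv y i else 0)"
      unfolding lc_def by (rule sum.cong) auto
    also have "\<dots> = colv e i" using fX eX by (simp add: sum.delta')
    finally show "lc (\<lambda>y. if y = e then 1 else 0) X i = colv e i" .
  qed
qed

lemma sep_from_span:
  assumes iB: "indep B" and BS: "BS \<subseteq> B"
    and sS: "\<forall>s\<in>S. inspan (colv s) BS" and sE: "\<forall>e\<in>E - S. inspan (colv e) (B - BS)"
    and XE: "X \<subseteq> E"
  shows "indep X \<longleftrightarrow> indep (X \<inter> S) \<and> indep (X - S)"
proof
  assume "indep X"
  then show "indep (X \<inter> S) \<and> indep (X - S)" using indep_subset by blast
next
  assume h: "indep (X \<inter> S) \<and> indep (X - S)"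
  have "indep ((X \<inter> S) \<union> (X - S))"
    by (rule indep_union_sep[OF conjunct1[OF h] conjunct2[OF h] _ iB BS]) (use sS sE XE in auto)
  moreover have "(X \<inter> S) \<union> (X - S) = X" by auto
  ultimately show "indep X" by simp
qed

lemma gap_lemma:
  assumes fC: "finite C" and CaC: "Ca \<subseteq> C"
    and notsep: "\<not> (\<forall>X\<subseteq>C. indep X \<longleftrightarrow> indep (X \<inter> Ca) \<and> indep (X - Ca))"
  shows "\<exists>BC x z. BC \<subseteq> C \<and> indep BC \<and> (\<forall>c\<in>C. inspan (colv c) BC) \<and> x \<in> BC \<and> x \<in> Ca
           \<and> z \<in> C - Ca \<and> \<not> inspan (colv z) (BC - {x})"
proof -
  have fCa: "finite Ca" using fC CaC finite_subset by blast
  obtain Ba where Ba: "Ba \<subseteq> Ca" "indep Ba" "\<forall>e\<in>Ca. inspan (colv e) Ba"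
    using max_indep[OF fCa _ indep_empty] by blast
  obtain BC where BC: "Ba \<subseteq> BC" "BC \<subseteq> C" "indep BC" "\<forall>e\<in>C. inspan (colv e) BC"
    using max_indep[OF fC _ Ba(2)] Ba(1) CaC by blast
  show ?thesis
  proof (rule ccontr)
    assume nex: "\<not> ?thesis"
    have allsp: "inspan (colv z) (BC - {x})" if "x \<in> Ba" "z \<in> C - Ca" for x z
      using nex BC Ba that by blast
    have zsp: "inspan (colv z) (BC - Ba)" if z: "z \<in> C - Ca" for z
    proof -
      obtain cz where cz: "colv z = lc cz BC" using BC(4) z unfolding inspan_def by blast
      have "\<forall>x\<in>Ba. cz x = 0"
        using coef_zero[OF BC(3) cz] allsp[OF _ z] BC(1) by blast
      then have "colv z = lc cz (BC - Ba)"
        using lc_restrict_zero[OF indep_finite[OF BC(3)] _ BC(1)] cz by simp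
      then show ?thesis unfolding inspan_def by blast
    qed
    have "\<forall>X\<subseteq>C. indep X \<longleftrightarrow> indep (X \<inter> Ca) \<and> indep (X - Ca)"
      using sep_from_span[OF BC(3) BC(1), of Ca C] Ba(3) zsp by blast
    then show False using notsep by blast
  qed
qed

end

context tnn begin

lemma main_tnn:
  assumes rk: "vec_space.rank k A = k"
    and pos: "\<forall>S. S \<subseteq> {0..<n} \<and> card S = k \<longrightarrow> max_minor A S \<ge> 0"
    and PA: "P = matrix_matroid A"
    and conn: "matroid_connected {0..<n} P"
    and ci: "cyclic_interval n I"
    and cc: "connected_component I (restr P I) C"
  shows "cyclic_interval n C"
proof (rule ccontr)
  assume nci: "\<not> cyclic_interval n C"
  have Pc: "X \<in> P \<longleftrightarrow> X \<subseteq> {0..<n} \<and> indep X" for X using P_char[OF rk PA] .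
  obtain a m where a: "a < n" and m: "m \<le> n" and I: "I = {(a + i) mod n | i. i < m}"
    using ci unfolding cyclic_interval_def by (elim exE conjE) (rule that; assumption)
  define p where "p e = rpos a n e" for e
  have Ichar: "e \<in> I \<longleftrightarrow> e < n \<and> p e < m" for e using I_char[OF a m I] p_def by simp
  have In: "I \<subseteq> {0..<n}"
  proof
    fix e assume "e \<in> I"
    then have "e < n" using Ichar[of e] by simp
    then show "e \<in> {0..<n}" by simp
  qed
  have ccd: "C \<noteq> {} \<and> separator I (restr P I) C \<and> matroid_connected C (restr (restr P I) C)"
    using cc unfolding connected_component_def .
  have Cne: "C \<noteq> {}" using ccd by (rule conjunct1)
  have sepC: "separator I (restr P I) C" using ccd by blast
  have connC: "matroid_connected C (restr (restr P I) C)" using ccd by blast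
  have sd: "C \<subseteq> I \<and> (\<forall>X. X \<subseteq> I \<longrightarrow> (X \<in> restr P I \<longleftrightarrow> X \<inter> C \<in> restr P I \<and> X - C \<in> restr P I))"
    using sepC unfolding separator_def .
  have CI: "C \<subseteq> I" using sd by (rule conjunct1)
  have Cn: "C \<subseteq> {0..<n}" using CI In by blast
  have fC: "finite C" by (rule finite_subset[OF Cn]) simp
  have sepC': "indep X \<longleftrightarrow> indep (X \<inter> C) \<and> indep (X - C)" if XI: "X \<subseteq> I" for X
  proof -
    have r: "Y \<in> restr P I \<longleftrightarrow> indep Y" if "Y \<subseteq> X" for Y
      using that XI In Pc unfolding restr_def by auto
    have "X \<in> restr P I \<longleftrightarrow> X \<inter> C \<in> restr P I \<and> X - C \<in> restr P I"
      using conjunct2[OF sd] XI by blast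
    then show ?thesis using r[of X] r[of "X \<inter> C"] r[of "X - C"] by auto
  qed
  have gap: "\<exists>t\<in>I. t \<notin> C \<and> (\<exists>x\<in>C. rpos a n x < rpos a n t) \<and> (\<exists>z\<in>C. rpos a n t < rpos a n z)"
  proof (rule ccontr)
    assume "\<not> ?thesis"
    then have "\<forall>t\<in>I. (\<exists>x\<in>C. rpos a n x < rpos a n t) \<and> (\<exists>z\<in>C. rpos a n t < rpos a n z) \<longrightarrow> t \<in> C"
      by blast
    then show False using ci_of_gapless[OF a m I CI Cne] nci by blast
  qed
  then obtain t where t: "t \<in> I" "t \<notin> C" and ex1: "\<exists>x\<in>C. rpos a n x < rpos a n t"
    and ex2: "\<exists>z\<in>C. rpos a n t < rpos a n z" by blast
  obtain x0 where x0': "x0 \<in> C" "rpos a n x0 < rpos a n t" using ex1 by blast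
  obtain z0 where z0': "z0 \<in> C" "rpos a n t < rpos a n z0" using ex2 by blast
  have x0: "x0 \<in> C" "p x0 < p t" using x0' by (simp_all add: p_def)
  have z0: "z0 \<in> C" "p t < p z0" using z0' by (simp_all add: p_def)
  have tn: "t < n" using t(1) Ichar[of t] by simp
  have pinj: "e1 = e2" if "e1 < n" "e2 < n" "p e1 = p e2" for e1 e2
    using rpos_inj[OF a that(1,2)] that(3) p_def by simp
  define Ca where "Ca = {c\<in>C. p c < p t}"
  have CaC: "Ca \<subseteq> C" unfolding Ca_def by blast
  have notsep: "\<not> (\<forall>X\<subseteq>C. indep X \<longleftrightarrow> indep (X \<inter> Ca) \<and> indep (X - Ca))"
  proof
    assume h: "\<forall>X\<subseteq>C. indep X \<longleftrightarrow> indep (X \<inter> Ca) \<and> indep (X - Ca)"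
    have r: "Y \<in> restr (restr P I) C \<longleftrightarrow> indep Y" if YC: "Y \<subseteq> C" for Y
    proof -
      have YI: "Y \<subseteq> I" using YC CI by (rule subset_trans)
      have Yn: "Y \<subseteq> {0..<n}" using YC Cn by (rule subset_trans)
      have "Y \<in> restr (restr P I) C \<longleftrightarrow> Y \<in> P" unfolding restr_def using YC YI by simp
      also have "\<dots> \<longleftrightarrow> indep Y" using Pc[of Y] Yn by simp
      finally show ?thesis .
    qed
    have "separator C (restr (restr P I) C) Ca"
      unfolding separator_def
    proof (intro conjI allI impI)
      show "Ca \<subseteq> C" by (rule CaC)
      fix X assume XC: "X \<subseteq> C"
      have e1: "X \<inter> Ca \<subseteq> C" and e2: "X - Ca \<subseteq> C" using XC by auto
      have "indep X \<longleftrightarrow> indep (X \<inter> Ca) \<and> indep (X - Ca)" using h XC by blast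
      then show "X \<in> restr (restr P I) C \<longleftrightarrow> X \<inter> Ca \<in> restr (restr P I) C \<and> X - Ca \<in> restr (restr P I) C"
        using r[OF XC] r[OF e1] r[OF e2] by simp
    qed
    moreover have "Ca \<noteq> {}" using x0 unfolding Ca_def by blast
    moreover have "Ca \<subset> C"
    proof -
      have "z0 \<notin> Ca" using z0 unfolding Ca_def by simp
      then show ?thesis using CaC z0(1) by blast
    qed
    ultimately show False using connC unfolding matroid_connected_def by blast
  qed
  obtain BC x z where BC: "BC \<subseteq> C" "indep BC" "\<forall>c\<in>C. inspan (colv c) BC"
    and x: "x \<in> BC" "x \<in> Ca" and z: "z \<in> C - Ca" and nsp: "\<not> inspan (colv z) (BC - {x})"
    using gap_lemma[OF fC CaC notsep] by blast
  have xC: "x \<in> C" using x CaC by blast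
  have zC: "z \<in> C" using z by blast
  have xn: "x < n" and zn: "z < n" using xC zC Cn by auto
  have pxt: "p x < p t" using x unfolding Ca_def by blast
  have ptz: "p t < p z"
  proof -
    have "\<not> p z < p t" using z unfolding Ca_def by blast
    moreover have "p z \<noteq> p t" using pinj[OF zn tn] zC t(2) by blast
    ultimately show ?thesis by simp
  qed
  have zx: "z \<noteq> x" using pxt ptz by auto
  define S where "S = {s \<in> I - C. p x < p s \<and> p s < p z}"
  have tS: "t \<in> S" unfolding S_def using t pxt ptz by blast
  have Sn: "S \<subseteq> {0..<n}" unfolding S_def using In by blast
  have fS: "finite S" by (rule finite_subset[OF Sn]) simp
  have SC: "S \<inter> C = {}" unfolding S_def by blast
  obtain BS where BS: "BS \<subseteq> S" "indep BS" "\<forall>e\<in>S. inspan (colv e) BS"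
    using max_indep[OF fS _ indep_empty] by blast
  have iU: "indep (BC \<union> BS)"
  proof -
    have sub: "BC \<union> BS \<subseteq> I" using BC(1) BS(1) CI unfolding S_def by blast
    have "(BC \<union> BS) \<inter> C = BC" using BC(1) BS(1) SC by blast
    moreover have "(BC \<union> BS) - C = BS" using BC(1) BS(1) SC by blast
    ultimately show ?thesis using sepC'[OF sub] BC(2) BS(2) by simp
  qed
  have Un: "BC \<union> BS \<subseteq> {0..<n}" using BC(1) BS(1) Cn Sn by blast
  obtain B where B: "BC \<union> BS \<subseteq> B" "B \<subseteq> {0..<n}" "card B = k" "indep B"
    using extend_basis[OF rk Un iU] by blast
  have fB: "finite B" using B(4) by (rule indep_finite)
  have BCB: "BC \<subseteq> B" and BSB: "BS \<subseteq> B" using B(1) by auto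
  obtain c0 where c0: "colv z = lc c0 BC" using BC(3) zC unfolding inspan_def by blast
  define cz where "cz e = (if e \<in> BC then c0 e else 0)" for e
  have czB: "colv z = lc cz B" using c0 lc_zero_ext[OF fB BCB, of c0] unfolding cz_def by simp
  have czx: "cz x \<noteq> 0"
  proof
    assume "cz x = 0"
    then have "c0 x = 0" using x unfolding cz_def by simp
    then have "colv z = lc c0 (BC - {x})"
      using lc_restrict_zero[OF indep_finite[OF BC(2)], of "{x}" c0] c0 x by simp
    then show False using nsp unfolding inspan_def by blast
  qed
  have zBC: "z \<notin> BC"
  proof
    assume "z \<in> BC"
    then have "inspan (colv z) (BC - {x})" using inspan_self[of "BC - {x}" z] indep_finite[OF BC(2)] zx by simp
    then show False using nsp by simp
  qed
  have zB: "z \<notin> B"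
  proof
    assume zB: "z \<in> B"
    have "lc (\<lambda>y. if y = z then 1 else 0) B = lc cz B" using lc_delta[OF fB zB] czB by simp
    then have "(if z = z then 1 else 0) = cz z" using indep_unique[OF B(4) _ zB] by blast
    then show False using zBC unfolding cz_def by simp
  qed
  have czb: "cz b = 0" if "b \<in> BS" for b
    using that BS(1) SC BC(1) unfolding cz_def by auto
  have key: "inspan (colv d) (B - BS)" if dn: "d < n" and dS: "d \<notin> S" for d
  proof (cases "d \<in> C")
    case True
    then have "inspan (colv d) BC" using BC(3) by blast
    moreover have "BC \<subseteq> B - BS" using BCB BS(1) SC BC(1) by blast
    ultimately show ?thesis using inspan_mono[of "B - BS" BC] fB by blast
  next
    case dC: False
    show ?thesis
    proof (cases "d \<in> B")
      case True
      then have "d \<in> B - BS" using BS(1) dS by blast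
      then show ?thesis using inspan_self fB by blast
    next
      case dB: False
      have outside: "p d < p x \<or> p z < p d"
      proof (rule ccontr)
        assume "\<not> (p d < p x \<or> p z < p d)"
        then have le: "p x \<le> p d" "p d \<le> p z" by auto
        have "p d \<noteq> p x" using pinj[OF dn xn] dC xC by blast
        moreover have "p d \<noteq> p z" using pinj[OF dn zn] dC zC by blast
        ultimately have lt: "p x < p d" "p d < p z" using le by auto
        have "z \<in> I" using zC CI by blast
        then have "p z < m" using Ichar[of z] by simp
        then have "d \<in> I" using Ichar[of d] dn lt by simp
        then have "d \<in> S" unfolding S_def using dC lt by blast
        then show False using dS by simp
      qed
      obtain ed where ed: "colv d = lc ed B" using indep_basis_span[OF B(4,3)] unfolding inspan_def by blast
      have edz: "ed b = 0" if bBS: "b \<in> BS" for b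
      proof -
        have bS: "b \<in> S" using bBS BS(1) by blast
        have bB: "b \<in> B" using bBS BSB by blast
        have xB: "x \<in> B" using x BCB by blast
        have xb: "x \<noteq> b" using bS xC SC by blast
        have bn: "b < n" using bS Sn by auto
        have pb: "p x < p b" "p b < p z" using bS unfolding S_def by auto
        have zd: "z \<noteq> d" using zC dC by blast
        have par: "even ((if b < x then 1 else 0) + (if d < z then 1 else 0) + (if d < x then 1 else 0)
                 + (if z < b then (1::nat) else 0))"
          by (rule parity_pos[OF xn bn zn dn a]) (use pb outside in \<open>simp_all add: p_def\<close>)
        show "ed b = 0"
          by (rule lemmaA[OF pos B(4) B(3) B(2) xB bB xb zn dn zB dB zd czB czx czb[OF bBS] ed par])
      qed
      have "colv d = lc ed (B - BS)"
        using lc_restrict_zero[OF fB _ BSB, of ed] edz ed by simp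
      then show ?thesis unfolding inspan_def by blast
    qed
  qed
  have "separator {0..<n} P S"
    unfolding separator_def
  proof (intro conjI allI impI)
    show "S \<subseteq> {0..<n}" by (rule Sn)
    fix X assume Xn: "X \<subseteq> {0..<n}"
    have "indep X \<longleftrightarrow> indep (X \<inter> S) \<and> indep (X - S)"
      by (rule sep_from_span[OF B(4) BSB BS(3) _ Xn]) (use key in auto)
    then show "X \<in> P \<longleftrightarrow> X \<inter> S \<in> P \<and> X - S \<in> P" using Pc Xn by auto
  qed
  moreover have "S \<noteq> {}" using tS by blast
  moreover have "S \<subset> {0..<n}" using Sn xn xC unfolding S_def by auto
  ultimately show False using conn unfolding matroid_connected_def by blast
qed

end

theorem lemma6p13:
  fixes n :: nat and P :: "nat set set" and I C :: "nat set"
  assumes "positroid n P"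
    and "matroid_connected {0..<n} P"
    and "cyclic_interval n I"
    and "connected_component I (restr P I) C"
  shows "cyclic_interval n C"
proof -
  obtain k A where A: "A \<in> carrier_mat k n" "vec_space.rank k A = k"
    "\<forall>S. S \<subseteq> {0..<n} \<and> card S = k \<longrightarrow> max_minor A S \<ge> 0" "P = matrix_matroid A"
    using assms(1) unfolding positroid_def by blast
  interpret tnn A k n by (unfold_locales) (rule A(1))
  show ?thesis by (rule main_tnn[OF A(2) A(3) A(4) assms(2-4)])
qed


end
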